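(* Let $A$ be a finite alphabet and $k\ge 0$. Then $\sim_{k+1}$ refines $\sim_k$, and $\sim_k$ is a congruence of finite index on $A^{\Delta}$ whose quotient forest algebra has idempotent and commutative horizontal monoid.
   Context: $A^{\Delta}=(H_A,V_A)$: $H_A$ is the monoid of forests over $A$ (finite ordered sequences of finite ordered $A$-labelled trees) under concatenation $+$; $V_A$ the monoid of contexts (forests with exactly one leaf replaced by a hole) acting by substitution; $as$ is the tree with root $a$ and child forest $s$. A congruence on $A^{\Delta}$ is an equivalence $\sim$ on $H_A$ with $s\sim s'\Rightarrow ps\sim ps'$ for every context $p$; the quotient forest algebra has horizontal monoid $H_A/{\sim}$ and vertical monoid the contexts modulo acting identically on classes. Equivalences $\sim_k$: $\sim_0$ identifies all forests; for $k\ge0$ and $s=a_1s_1+\cdots+a_rs_r$ ($a_i\in A$, $s_i\in H_A$) let $T^{k+1}_s=\{(a_i,[s_i]_{\sim_k}):1\le i\le r\}$, and $s\sim_{k+1}s'$ iff $T^{k+1}_s=T^{k+1}_{s'}$. *)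

theory Defs
  imports Main
begin

text \<open>Finite ordered A-labelled trees; a forest is a finite ordered list of trees.
  Horizontal composition (+) of forests is list concatenation @.\<close>
datatype 'a tree = Node 'a "'a tree list"

type_synonym 'a forest = "'a tree list"

text \<open>Contexts: forests with exactly one leaf replaced by a hole.
  CHole l r is the forest l + hole + r; CIn l a p r is l + a(p) + r.\<close>
datatype 'a ctx = CHole "'a forest" "'a forest" | CIn "'a forest" 'a "'a ctx" "'a forest"

primrec csubst :: "'a ctx \<Rightarrow> 'a forest \<Rightarrow> 'a forest" where
  "csubst (CHole l r) s = l @ s @ r"
| "csubst (CIn l a p r) s = l @ [Node a (csubst p s)] @ r"

primrec sim :: "nat \<Rightarrow> 'a forest \<Rightarrow> 'a forest \<Rightarrow> bool" where
  "sim 0 s t = True"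
| "sim (Suc k) s t =
     ((\<lambda>x. case x of Node a c \<Rightarrow> (a, {u. sim k c u})) ` set s =
      (\<lambda>x. case x of Node a c \<Rightarrow> (a, {u. sim k c u})) ` set t)"

definition forest_congruence :: "('a forest \<Rightarrow> 'a forest \<Rightarrow> bool) \<Rightarrow> bool" where
  "forest_congruence R \<longleftrightarrow> equivp R \<and>
     (\<forall>p s s'. R s s' \<longrightarrow> R (csubst p s) (csubst p s'))"

definition finite_index :: "('a forest \<Rightarrow> 'a forest \<Rightarrow> bool) \<Rightarrow> bool" where
  "finite_index R \<longleftrightarrow> finite (UNIV // {(s, t). R s t})"

definition quotient_horizontal_idem_comm :: "('a forest \<Rightarrow> 'a forest \<Rightarrow> bool) \<Rightarrow> bool" where
  "quotient_horizontal_idem_comm R \<longleftrightarrow>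
     (\<forall>s. R (s @ s) s) \<and> (\<forall>s t. R (s @ t) (t @ s))"

end

theory Submission
  imports Defs
begin

definition fk :: "nat \<Rightarrow> 'a tree \<Rightarrow> 'a \<times> 'a forest set" where
  "fk k x = (case x of Node a c \<Rightarrow> (a, {u. sim k c u}))"

lemma sim_Suc_fk: "sim (Suc k) s t \<longleftrightarrow> fk k ` set s = fk k ` set t"
  by (simp add: fk_def)

lemma sim_refl: "sim k s s" by (cases k) auto
lemma sim_sym: "sim k s t \<Longrightarrow> sim k t s" by (cases k) auto
lemma sim_trans: "sim k s t \<Longrightarrow> sim k t u \<Longrightarrow> sim k s u" by (cases k) auto

lemma sim_class_eq: "sim k s t \<Longrightarrow> {u. sim k s u} = {u. sim k t u}"
  using sim_sym sim_trans by blast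

lemma sim_class_eqD: "{u. sim k s u} = {u. sim k t u} \<Longrightarrow> sim k s t"
  using sim_refl by blast

lemma refine: fixes s t :: "'a forest" shows "sim (Suc k) s t \<Longrightarrow> sim k s t"
proof (induction k arbitrary: s t)
  case 0 then show ?case by simp
next
  case (Suc k)
  have key: "fk k x = fk k y" if "fk (Suc k) x = fk (Suc k) y" for x y :: "'a tree"
  proof (cases x; cases y)
    fix a c b d assume xy: "x = Node a c" "y = Node b d"
    with that have "a = b" "{u. sim (Suc k) c u} = {u. sim (Suc k) d u}"
      by (simp_all only: fk_def tree.case prod.inject)
    then have "sim (Suc k) c d" using sim_class_eqD by blast
    then have "sim k c d" using Suc.IH by blast
    then have "{u. sim k c u} = {u. sim k d u}" by (rule sim_class_eq)
    then show ?thesis using xy \<open>a = b\<close> by (simp only: fk_def tree.case)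
  qed
  from Suc.prems have E: "fk (Suc k) ` set s = fk (Suc k) ` set t"
    by (simp only: sim_Suc_fk)
  have "fk k ` set s \<subseteq> fk k ` set t"
  proof
    fix z assume "z \<in> fk k ` set s"
    then obtain x where x: "x \<in> set s" "z = fk k x" by auto
    then have "fk (Suc k) x \<in> fk (Suc k) ` set t" using E x(1) by blast
    then obtain y where "y \<in> set t" "fk (Suc k) x = fk (Suc k) y" by auto
    then show "z \<in> fk k ` set t" using key x by (metis image_eqI)
  qed
  moreover have "fk k ` set t \<subseteq> fk k ` set s"
  proof
    fix z assume "z \<in> fk k ` set t"
    then obtain x where x: "x \<in> set t" "z = fk k x" by auto
    then have "fk (Suc k) x \<in> fk (Suc k) ` set s" using E x(1) by blast
    then obtain y where "y \<in> set s" "fk (Suc k) x = fk (Suc k) y" by auto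
    then show "z \<in> fk k ` set s" using key x by (metis image_eqI)
  qed
  ultimately show ?case by (simp only: sim_Suc_fk)
qed

lemma cong: "sim k s t \<Longrightarrow> sim k (csubst p s) (csubst p t)"
proof (induction p arbitrary: k)
  case (CHole l r)
  then show ?case
    by (cases k) (auto simp: sim_Suc_fk image_Un)
next
  case (CIn l a p r)
  show ?case
  proof (cases k)
    case 0 then show ?thesis by simp
  next
    case (Suc k')
    with CIn.prems have "sim k' s t" using refine by blast
    then have "sim k' (csubst p s) (csubst p t)" by (rule CIn.IH)
    then have "{u. sim k' (csubst p s) u} = {u. sim k' (csubst p t) u}"
      by (rule sim_class_eq)
    then show ?thesis using Suc by (simp add: sim_Suc_fk image_Un fk_def)
  qed
qed

lemma fin_classes: "finite (range (\<lambda>s::('a::finite) forest. {u. sim k s u}))"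
proof (induction k)
  case 0 then show ?case
    by simp
next
  case (Suc k)
  let ?C = "range (\<lambda>s::'a forest. {u. sim k s u})"
  have sub: "range (\<lambda>s::'a forest. {u. sim (Suc k) s u}) \<subseteq>
      (\<lambda>S. {u. fk k ` set u = S}) ` Pow (UNIV \<times> ?C)"
  proof
    fix X assume "X \<in> range (\<lambda>s::'a forest. {u. sim (Suc k) s u})"
    then obtain s where X: "X = {u. sim (Suc k) s u}" by auto
    have "fk k ` set s \<subseteq> UNIV \<times> ?C"
      by (auto simp: fk_def split: tree.splits)
    moreover have "X = {u. fk k ` set u = fk k ` set s}"
      using X by (auto simp only: sim_Suc_fk mem_Collect_eq)
    ultimately show "X \<in> (\<lambda>S. {u. fk k ` set u = S}) ` Pow (UNIV \<times> ?C)" by auto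
  qed
  show ?case
    by (rule finite_subset[OF sub]) (use Suc in auto)
qed

theorem proposition3:
  fixes k :: nat
  shows "(\<forall>s t :: ('a::finite) forest. sim (Suc k) s t \<longrightarrow> sim k s t)
     \<and> forest_congruence (sim k :: 'a forest \<Rightarrow> 'a forest \<Rightarrow> bool)
     \<and> finite_index (sim k :: 'a forest \<Rightarrow> 'a forest \<Rightarrow> bool)
     \<and> quotient_horizontal_idem_comm (sim k :: 'a forest \<Rightarrow> 'a forest \<Rightarrow> bool)"
proof (intro conjI allI impI)
  show "sim k s t" if "sim (Suc k) s t" for s t :: "'a forest" using that by (rule refine)
  show "forest_congruence (sim k :: 'a forest \<Rightarrow> 'a forest \<Rightarrow> bool)"
    unfolding forest_congruence_def
    by (auto intro!: equivpI reflpI sympI transpI cong intro: sim_refl sim_sym sim_trans)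
  have "UNIV // {(s, t). sim k s t} = range (\<lambda>s::'a forest. {u. sim k s u})"
    by (auto simp: quotient_def Image_def)
  then show "finite_index (sim k :: 'a forest \<Rightarrow> 'a forest \<Rightarrow> bool)"
    unfolding finite_index_def using fin_classes by metis
  show "quotient_horizontal_idem_comm (sim k :: 'a forest \<Rightarrow> 'a forest \<Rightarrow> bool)"
    unfolding quotient_horizontal_idem_comm_def
    by (cases k) (auto simp: sim_Suc_fk image_Un)
qed

end
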